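(* Let $n\ge2$ and $s\ge1$ be integers and $b\ge2$ an integer. For a degree pattern $\mathbf d=(d_1,\dots,d_s)\in\mathbb N^s$ with $d_1\ge\cdots\ge d_s\ge1$ and $d_1\ge2$, put $\delta(\mathbf d)=d_1\cdots d_s$ and $|\mathbf D(\mathbf d)|=\sum_{i=1}^s\big(\binom{d_i+n}{n}-1\big)$. Let $\mathbf d^{(b)}=(b,1,\dots,1)\in\mathbb N^s$. Then $|\mathbf D(\mathbf d^{(b)})|>|\mathbf D(\mathbf d)|$ for every such degree pattern $\mathbf d\ne\mathbf d^{(b)}$ with $\delta(\mathbf d)=b$. *)

theory Defs
  imports Main
begin

definition delta :: "nat list \<Rightarrow> nat" where
  "delta d = prod_list d"

definition Dsize :: "nat \<Rightarrow> nat list \<Rightarrow> nat" where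
  "Dsize n d = (\<Sum>i<length d. ((d ! i + n) choose n) - 1)"

definition deg_pattern :: "nat \<Rightarrow> nat list \<Rightarrow> bool" where
  "deg_pattern s d \<longleftrightarrow> length d = s \<and> sorted_wrt (\<ge>) d \<and> (\<forall>x\<in>set d. x \<ge> 1) \<and> d ! 0 \<ge> 2"

definition dpat_b :: "nat \<Rightarrow> nat \<Rightarrow> nat list" where
  "dpat_b s b = b # replicate (s - 1) 1"

end

theory Submission
  imports Defs
begin

lemma D_step:
  fixes m k :: nat
  shows "(Suc k + Suc m choose Suc m) = (k + Suc m choose m) + (k + Suc m choose Suc m)"
  using binomial_Suc_Suc[of "k + Suc m" m] by simp

lemma D_strict:
  fixes m k :: nat assumes "m \<ge> 1"
  shows "(k + Suc m choose m) < (Suc k + Suc m choose m)"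
proof -
  obtain j where j: "m = Suc j" using assms by (cases m) auto
  have "(Suc k + Suc m choose m) = (k + Suc m choose j) + (k + Suc m choose m)"
    using binomial_Suc_Suc[of "k + Suc m" j] j by simp
  moreover have "(k + Suc m choose j) > 0" using j by simp
  ultimately show ?thesis by simp
qed

lemma D_mono:
  fixes m :: nat assumes "m \<ge> 1"
  shows "a \<le> c \<Longrightarrow> (a + Suc m choose m) \<le> (c + Suc m choose m)"
  by (rule binomial_right_mono) simp

lemma key_add:
  fixes m x y :: nat assumes m: "m \<ge> 1" and x: "x \<ge> 1" and y: "y \<ge> 2"
  defines "h \<equiv> \<lambda>k. (k + Suc m choose Suc m)"
  shows "h x + h y < h (x + y) + h 1"
proof -
  obtain j where yj: "y = Suc (Suc j)" using y by (metis add_2_eq_Suc le_Suc_ex)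
  have "h x + h (Suc (Suc j)) < h (x + Suc (Suc j)) + h 1"
  proof (induction j)
    case 0
    have a: "h (Suc (Suc x)) = (Suc x + Suc m choose m) + (x + Suc m choose m) + h x"
      unfolding h_def using D_step[of x m] D_step[of "Suc x" m] by simp
    have b: "h 2 = (1 + Suc m choose m) + h 1"
      unfolding h_def using D_step[of 1 m] by (simp add: numeral_2_eq_2)
    have c: "(1 + Suc m choose m) \<le> (x + Suc m choose m)" using D_mono[OF m x] .
    have d: "(x + Suc m choose m) < (Suc x + Suc m choose m)" using D_strict[OF m] .
    show ?case using a b c d by (simp add: numeral_2_eq_2)
  next
    case (Suc j)
    have a: "h (x + Suc (Suc (Suc j))) = (x + Suc (Suc j) + Suc m choose m) + h (x + Suc (Suc j))"
      unfolding h_def using D_step[of "x + Suc (Suc j)" m] by simp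
    have b: "h (Suc (Suc (Suc j))) = (Suc (Suc j) + Suc m choose m) + h (Suc (Suc j))"
      unfolding h_def using D_step[of "Suc (Suc j)" m] by simp
    have c: "(Suc (Suc j) + Suc m choose m) \<le> (x + Suc (Suc j) + Suc m choose m)"
      using D_mono[OF m, of "Suc (Suc j)" "x + Suc (Suc j)"] by simp
    show ?case using a b c Suc.IH by simp
  qed
  then show ?thesis using yj by simp
qed

lemma key_mult:
  fixes m x y :: nat assumes m: "m \<ge> 1" and x: "x \<ge> 2" and y: "y \<ge> 2"
  defines "h \<equiv> \<lambda>k. (k + Suc m choose Suc m)"
  shows "h x + h y < h (x * y) + h 1"
proof -
  have "x + y \<le> x * y"
  proof -
    have "x * y = x * (y - 1) + x" using y by (simp add: algebra_simps)
    moreover have "x * (y - 1) \<ge> y" using x y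
    proof -
      have "x * (y - 1) \<ge> 2 * (y - 1)" using x by (intro mult_le_mono1)
      then show ?thesis using y by linarith
    qed
    ultimately show ?thesis by simp
  qed
  then have "h (x + y) \<le> h (x * y)" unfolding h_def by (intro binomial_right_mono) simp
  with key_add[OF m _ y, of x] x show ?thesis unfolding h_def by simp
qed

lemma key_weak:
  fixes m x y :: nat assumes m: "m \<ge> 1" and x: "x \<ge> 1" and y: "y \<ge> 1"
  defines "h \<equiv> \<lambda>k. (k + Suc m choose Suc m)"
  shows "h x + h y \<le> h (x * y) + h 1"
proof (cases "x = 1 \<or> y = 1")
  case True then show ?thesis by auto
next
  case False
  then have "x \<ge> 2" "y \<ge> 2" using x y by auto
  from key_mult[OF m this] show ?thesis unfolding h_def by simp
qed

lemma prodge1: "\<forall>x\<in>set xs. (x::nat) \<ge> 1 \<Longrightarrow> prod_list xs \<ge> 1"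
  by (induction xs) auto

lemma list_weak:
  fixes m :: nat assumes m: "m \<ge> 1"
  defines "h \<equiv> \<lambda>k. (k + Suc m choose Suc m)"
  shows "\<forall>x\<in>set xs. x \<ge> 1 \<Longrightarrow> sum_list (map h xs) + h 1 \<le> h (prod_list xs) + length xs * h 1"
proof (induction xs)
  case Nil then show ?case by simp
next
  case (Cons a xs)
  have p: "prod_list xs \<ge> 1" using Cons.prems
    using prodge1 by simp
  have "h a + h (prod_list xs) \<le> h (a * prod_list xs) + h 1"
    using key_weak[OF m _ p, of a] Cons.prems unfolding h_def by simp
  then show ?case using Cons by simp
qed

lemma prod1: "prod_list (xs::nat list) = 1 \<Longrightarrow> \<forall>x\<in>set xs. x = 1"
  by (induction xs) auto

theorem lemma5p1:
  fixes n s b :: nat and d :: "nat list"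
  assumes "n \<ge> 2" and "s \<ge> 1" and "b \<ge> 2"
    and "deg_pattern s d" and "d \<noteq> dpat_b s b" and "delta d = b"
  shows "Dsize n (dpat_b s b) > Dsize n d"
proof -
  obtain m where nm: "n = Suc m" and m: "m \<ge> 1" using assms(1) by (cases n) auto
  define h where "h \<equiv> \<lambda>k. (k + Suc m choose Suc m)"
  have len: "length d = s" and srt: "sorted_wrt (\<ge>) d" and ge1: "\<forall>x\<in>set d. x \<ge> 1"
    and d0: "d ! 0 \<ge> 2" using assms(4) unfolding deg_pattern_def by auto
  obtain a xs where d: "d = a # xs" using len assms(2) by (cases d) auto
  have pb: "a * prod_list xs = b" using assms(6) d unfolding delta_def by simp
  have xs1: "\<forall>x\<in>set xs. x \<ge> 1" using ge1 d by simp
  have pxs: "prod_list xs \<ge> 2"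
  proof (rule ccontr)
    assume "\<not> prod_list xs \<ge> 2"
    moreover have "prod_list xs \<noteq> 0" using prodge1[OF xs1] by simp
    ultimately have "prod_list xs = 1" by simp
    then have "\<forall>x\<in>set xs. x = 1" using prod1 by blast
    then have "xs = replicate (s - 1) 1" using len d
    proof -
      have L: "length xs = s - 1" using len d by simp
      have "replicate (length xs) 1 = xs" using replicate_length_same[of xs 1] \<open>\<forall>x\<in>set xs. x = 1\<close> by blast
      then show ?thesis using L by simp
    qed
    moreover have "a = b" using pb \<open>prod_list xs = 1\<close> by simp
    ultimately show False using assms(5) d unfolding dpat_b_def by simp
  qed
  have a2: "a \<ge> 2" using d0 d by simp
  have w: "sum_list (map h xs) + h 1 \<le> h (prod_list xs) + length xs * h 1"
    using list_weak[OF m xs1] unfolding h_def by simp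
  have st: "h a + h (prod_list xs) < h b + h 1"
    using key_mult[OF m a2 pxs] pb unfolding h_def by simp
  have main: "sum_list (map h d) < h b + (s - 1) * h 1"
  proof -
    have "s - 1 = length xs" using d len by simp
    then show ?thesis using w st d by simp
  qed
  have f: "\<And>k. (k + n choose n) = h k" unfolding h_def nm by simp
  have hpos: "\<And>k. h k \<ge> 1" unfolding h_def by (simp del: binomial_Suc_Suc add: Suc_le_eq)
  have Dd: "Dsize n d = sum_list (map (\<lambda>k. h k - 1) d)"
    unfolding Dsize_def f by (simp add: sum_list_sum_nth atLeast0LessThan)
  have Db: "Dsize n (dpat_b s b) = sum_list (map (\<lambda>k. h k - 1) (dpat_b s b))"
    unfolding Dsize_def f by (simp add: sum_list_sum_nth atLeast0LessThan)
  have gen: "\<And>ys. sum_list (map (\<lambda>k. h k - 1) ys) + length ys = sum_list (map h ys)"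
  proof -
    fix ys show "sum_list (map (\<lambda>k. h k - 1) ys) + length ys = sum_list (map h ys)"
    proof (induction ys)
      case (Cons a ys)
      have "h a \<ge> 1" by (rule hpos)
      then show ?case using Cons.IH by simp
    qed simp
  qed
  have sb: "sum_list (map h (dpat_b s b)) = h b + (s - 1) * h 1"
    unfolding dpat_b_def by (simp add: sum_list_replicate)
  have "length (dpat_b s b) = s" using assms(2) unfolding dpat_b_def by simp
  then show ?thesis using gen[of d] gen[of "dpat_b s b"] sb main len Dd Db by simp
qed

end
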